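(* Let $L$ be an infinite set and consider the edged cube $\bar Q_L$. For a basic sequence, the following are equivalent: it is convergent over $f_{\mathrm{solved}}$; it is universally convergent; it is twist-finite.
   Context: Let $L$ be an infinite set, $-L=\{-r:r\in L\}$ a disjoint copy of $L$, and $0$ a new element; $L^\dagger=-L\cup\{0\}\cup L$ with $-(-r)=r$, $-0=0$. Adjoin $\pm\infty$ with $-(+\infty)=-\infty$ and set $\bar L^\dagger=L^\dagger\cup\{\pm\infty\}$. Points of $U=(\bar L^\dagger)^3$ have coordinates $x,y,z$. The edged cube $\bar Q_L$ is the set of cells $(p,i)$ with $p\in U$, $i\in\{x,y,z\}$, $p_i\in\{\pm\infty\}$ ($i$ marks the face of the cell). For $i\in\{x,y,z\}$, $\alpha\in\bar L^\dagger$, the quarter-turn twist $T_{i,\alpha}$ is the permutation of cells fixing every cell whose point $p$ has $p_i\ne\alpha$ and acting on the others by the rotation $T_{x,\alpha}(\alpha,y,z)=(\alpha,-z,y)$, $T_{y,\alpha}(x,\alpha,z)=(z,\alpha,-x)$, $T_{z,\alpha}(x,y,\alpha)=(-y,x,\alpha)$, the marked coordinate being carried along by the rotation. Basic twists are $T,T^2,T^3$ for quarter-turn twists $T$. A basic sequence is a sequence $\langle\sigma_\eta:\eta<\theta\rangle$ of basic twists of ordinal length $\theta$; it is twist-finite if each basic twist occurs in it only finitely many times. A labelling is a map $f$ from cells to $X\cup\{\mathrm{NaC}\}$ for a set $X\not\ni\mathrm{NaC}$; it is legal if it never takes value NaC; a configuration is a labelling with $X$ the six colors red, white, green, orange, yellow,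 blue. The solved configuration $f_{\mathrm{solved}}$ colors cell $(p,i)$ red, blue, white, orange, green, yellow according as $p_i=+\infty$ with $i=x,y,z$, or $p_i=-\infty$ with $i=x,y,z$. A twist $\sigma$ acts by $(\sigma f)(c)=f(\sigma^{-1}c)$. Applying $\langle\sigma_\eta:\eta<\theta\rangle$ to $f_0$ produces $f_{\eta+1}=\sigma_\eta f_\eta$, and for limit $\lambda\le\theta$, $f_\lambda(c)$ is the eventually constant value of $f_\eta(c)$ ($\eta<\lambda$) if it exists and NaC otherwise; $f_\theta$ is the terminal labelling. The sequence is convergent over $f_0$ if $f_\theta$ is legal, and universally convergent if it is convergent over the identity labelling (each cell labelled by itself). *)

theory Defs
  imports Main
begin

text \<open>Coordinates in the extended set: Pos r = r, Neg r = -r (r in L), Zero = 0,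
  PInf = +infinity, NInf = -infinity. The set L is the universe of the type 'l.\<close>
datatype 'l coord = Pos 'l | Neg 'l | Zero | PInf | NInf

fun cneg :: "'l coord \<Rightarrow> 'l coord" where
  "cneg (Pos r) = Neg r"
| "cneg (Neg r) = Pos r"
| "cneg Zero = Zero"
| "cneg PInf = NInf"
| "cneg NInf = PInf"

datatype axis = AX | AY | AZ

type_synonym 'l point = "'l coord \<times> 'l coord \<times> 'l coord"
type_synonym 'l cell = "'l point \<times> axis"

definition coord :: "'l point \<Rightarrow> axis \<Rightarrow> 'l coord" where
  "coord p i = (case i of AX \<Rightarrow> fst p | AY \<Rightarrow> fst (snd p) | AZ \<Rightarrow> snd (snd p))"

definition cells :: "'l cell set" where
  "cells = {c. coord (fst c) (snd c) \<in> {PInf, NInf}}"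

fun rot :: "axis \<Rightarrow> 'l point \<Rightarrow> 'l point" where
  "rot AX (a, y, z) = (a, cneg z, y)"
| "rot AY (x, a, z) = (z, a, cneg x)"
| "rot AZ (x, y, a) = (cneg y, x, a)"

text \<open>Where the marked coordinate is carried by the rotation.\<close>
fun rot_axis :: "axis \<Rightarrow> axis \<Rightarrow> axis" where
  "rot_axis AX AX = AX" | "rot_axis AX AY = AZ" | "rot_axis AX AZ = AY"
| "rot_axis AY AX = AZ" | "rot_axis AY AY = AY" | "rot_axis AY AZ = AX"
| "rot_axis AZ AX = AY" | "rot_axis AZ AY = AX" | "rot_axis AZ AZ = AZ"

definition qturn :: "axis \<Rightarrow> 'l coord \<Rightarrow> 'l cell \<Rightarrow> 'l cell" where
  "qturn i \<alpha> c = (if coord (fst c) i = \<alpha> then (rot i (fst c), rot_axis i (snd c)) else c)"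

definition basic_twists :: "('l cell \<Rightarrow> 'l cell) set" where
  "basic_twists = {qturn i \<alpha> ^^ k | i \<alpha> k. k \<in> {1, 2, 3}}"

text \<open>Labellings take values in 'x option; None plays the role of NaC.\<close>
definition act :: "('l cell \<Rightarrow> 'l cell) \<Rightarrow> ('l cell \<Rightarrow> 'x option) \<Rightarrow> ('l cell \<Rightarrow> 'x option)" where
  "act \<sigma> f = (\<lambda>c. f (inv \<sigma> c))"

text \<open>A basic sequence of ordinal length theta is represented by an element theta of a
  well-ordered type 'o together with sigma :: 'o => twist, only the values at eta < theta
  mattering. run sigma f0 eta is the labelling f_eta.\<close>
definition run :: "('o::wellorder \<Rightarrow> 'l cell \<Rightarrow> 'l cell) \<Rightarrow> ('l cell \<Rightarrow> 'x option)
    \<Rightarrow> 'o \<Rightarrow> 'l cell \<Rightarrow> 'x option" where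
  "run \<sigma> f0 = wfrec {(a, b). a < b} (\<lambda>F \<eta>.
     if \<not> (\<exists>\<xi>. \<xi> < \<eta>) then f0
     else if (\<exists>p<\<eta>. \<forall>q<\<eta>. q \<le> p)
       then act (\<sigma> (THE p. p < \<eta> \<and> (\<forall>q<\<eta>. q \<le> p))) (F (THE p. p < \<eta> \<and> (\<forall>q<\<eta>. q \<le> p)))
     else (\<lambda>c. if (\<exists>v. \<exists>\<xi><\<eta>. \<forall>q. \<xi> \<le> q \<and> q < \<eta> \<longrightarrow> F q c = v)
               then (THE v. \<exists>\<xi><\<eta>. \<forall>q. \<xi> \<le> q \<and> q < \<eta> \<longrightarrow> F q c = v)
               else None))"

definition basic_sequence :: "('o::wellorder \<Rightarrow> 'l cell \<Rightarrow> 'l cell) \<Rightarrow> 'o \<Rightarrow> bool" where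
  "basic_sequence \<sigma> \<theta> = (\<forall>\<eta><\<theta>. \<sigma> \<eta> \<in> basic_twists)"

definition twist_finite :: "('o::wellorder \<Rightarrow> 'l cell \<Rightarrow> 'l cell) \<Rightarrow> 'o \<Rightarrow> bool" where
  "twist_finite \<sigma> \<theta> = (\<forall>\<tau>\<in>basic_twists. finite {\<eta>. \<eta> < \<theta> \<and> \<sigma> \<eta> = \<tau>})"

definition convergent_over :: "('o::wellorder \<Rightarrow> 'l cell \<Rightarrow> 'l cell) \<Rightarrow> 'o \<Rightarrow> ('l cell \<Rightarrow> 'x option) \<Rightarrow> bool" where
  "convergent_over \<sigma> \<theta> f0 = (\<forall>c\<in>cells. run \<sigma> f0 \<theta> c \<noteq> None)"

definition universally_convergent :: "('o::wellorder \<Rightarrow> 'l cell \<Rightarrow> 'l cell) \<Rightarrow> 'o \<Rightarrow> bool" where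
  "universally_convergent \<sigma> \<theta> = convergent_over \<sigma> \<theta> (\<lambda>c. Some c)"

datatype color = Red | White | Green | Orange | Yellow | Blue

definition f_solved :: "'l cell \<Rightarrow> color option" where
  "f_solved c = Some (
     let v = coord (fst c) (snd c) in
     if v = PInf then (case snd c of AX \<Rightarrow> Red | AY \<Rightarrow> Blue | AZ \<Rightarrow> White)
     else (case snd c of AX \<Rightarrow> Orange | AY \<Rightarrow> Green | AZ \<Rightarrow> Yellow))"

end

theory Submission
  imports Defs
begin


definition runH :: "('o::wellorder \<Rightarrow> 'l cell \<Rightarrow> 'l cell) \<Rightarrow> ('l cell \<Rightarrow> 'x option)
   \<Rightarrow> ('o \<Rightarrow> 'l cell \<Rightarrow> 'x option) \<Rightarrow> 'o \<Rightarrow> 'l cell \<Rightarrow> 'x option" where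
 "runH \<sigma> f0 = (\<lambda>F \<eta>.
     if \<not> (\<exists>\<xi>. \<xi> < \<eta>) then f0
     else if (\<exists>p<\<eta>. \<forall>q<\<eta>. q \<le> p)
       then act (\<sigma> (THE p. p < \<eta> \<and> (\<forall>q<\<eta>. q \<le> p))) (F (THE p. p < \<eta> \<and> (\<forall>q<\<eta>. q \<le> p)))
     else (\<lambda>c. if (\<exists>v. \<exists>\<xi><\<eta>. \<forall>q. \<xi> \<le> q \<and> q < \<eta> \<longrightarrow> F q c = v)
               then (THE v. \<exists>\<xi><\<eta>. \<forall>q. \<xi> \<le> q \<and> q < \<eta> \<longrightarrow> F q c = v)
               else None))"

lemma the_pred:
  assumes "p < (\<eta>::'o::wellorder)" "\<forall>q<\<eta>. q \<le> p"
  shows "(THE p. p < \<eta> \<and> (\<forall>q<\<eta>. q \<le> p)) = p"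
  using assms by (intro the_equality) (auto intro: order.antisym)

lemma run_fix: "run \<sigma> f0 = runH \<sigma> f0 (run \<sigma> f0)"
proof -
  have "wfrec {(a, b). a < b} (runH \<sigma> f0) = runH \<sigma> f0 (wfrec {(a, b). a < b} (runH \<sigma> f0))"
  proof (rule wfrec_fixpoint)
    show "wf {(a::'a, b). a < b}" by (rule wf)
    show "adm_wf {(a::'a, b). a < b} (runH \<sigma> f0)"
      unfolding adm_wf_def
    proof (intro allI impI)
      fix F G :: "'a \<Rightarrow> 'b cell \<Rightarrow> 'c option" and \<eta> :: 'a
      assume h: "\<forall>z. (z, \<eta>) \<in> {(a, b). a < b} \<longrightarrow> F z = G z"
      show "runH \<sigma> f0 F \<eta> = runH \<sigma> f0 G \<eta>"
      proof (cases "\<exists>p<\<eta>. \<forall>q<\<eta>. q \<le> p")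
        case True
        then obtain p where p: "p < \<eta>" "\<forall>q<\<eta>. q \<le> p" by blast
        have c1: "\<exists>\<xi>. \<xi> < \<eta>" using p by blast
        have "runH \<sigma> f0 F \<eta> = act (\<sigma> p) (F p)" "runH \<sigma> f0 G \<eta> = act (\<sigma> p) (G p)"
          unfolding runH_def by (simp_all only: c1 True not_True_eq_False if_False if_True the_pred[OF p] simp_thms)
        then show ?thesis using h p by simp
      next
        case False
        have e: "(\<forall>q. \<xi> \<le> q \<and> q < \<eta> \<longrightarrow> F q c = v) = (\<forall>q. \<xi> \<le> q \<and> q < \<eta> \<longrightarrow> G q c = v)" for \<xi> c v
          using h by auto
        show ?thesis unfolding runH_def by (simp only: if_not_P[OF False] e)
      qed
    qed
  qed
  then show ?thesis unfolding run_def[abs_def] runH_def by simp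
qed

definition islim :: "'o::wellorder \<Rightarrow> bool" where
  "islim \<eta> \<longleftrightarrow> (\<exists>\<xi>. \<xi> < \<eta>) \<and> \<not> (\<exists>p<\<eta>. \<forall>q<\<eta>. q \<le> p)"

lemma run_bot: "\<not> (\<exists>\<xi>. \<xi> < \<eta>) \<Longrightarrow> run \<sigma> f0 \<eta> = f0"
  by (subst run_fix) (simp add: runH_def)

lemma run_succ: "p < \<eta> \<Longrightarrow> \<forall>q<\<eta>. q \<le> p \<Longrightarrow> run \<sigma> f0 \<eta> = act (\<sigma> p) (run \<sigma> f0 p)"
proof -
  assume p: "p < \<eta>" "\<forall>q<\<eta>. q \<le> p"
  have c1: "\<exists>\<xi>. \<xi> < \<eta>" using p by blast
  have c2: "\<exists>p<\<eta>. \<forall>q<\<eta>. q \<le> p" using p by blast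
  show ?thesis
    by (subst run_fix) (simp only: runH_def c1 c2 not_True_eq_False if_False if_True the_pred[OF p] simp_thms)
qed

lemma run_lim: "islim \<eta> \<Longrightarrow> run \<sigma> f0 \<eta> c = (if (\<exists>v. \<exists>\<xi><\<eta>. \<forall>q. \<xi> \<le> q \<and> q < \<eta> \<longrightarrow> run \<sigma> f0 q c = v)
               then (THE v. \<exists>\<xi><\<eta>. \<forall>q. \<xi> \<le> q \<and> q < \<eta> \<longrightarrow> run \<sigma> f0 q c = v)
               else None)"
proof -
  assume l: "islim \<eta>"
  have c1: "\<not>\<not> (\<exists>\<xi>. \<xi> < \<eta>)" and c2: "\<not> (\<exists>p<\<eta>. \<forall>q<\<eta>. q \<le> p)" using l unfolding islim_def by auto
  show ?thesis by (subst run_fix) (simp only: runH_def if_not_P[OF c1] if_not_P[OF c2])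
qed

lemma run_lim_val:
  assumes l: "islim \<eta>" and x: "\<xi> < \<eta>" and h: "\<forall>q. \<xi> \<le> q \<and> q < \<eta> \<longrightarrow> run \<sigma> f0 q c = v"
  shows "run \<sigma> f0 \<eta> c = v"
proof -
  have u: "(THE v. \<exists>\<xi><\<eta>. \<forall>q. \<xi> \<le> q \<and> q < \<eta> \<longrightarrow> run \<sigma> f0 q c = v) = v"
  proof (rule the_equality)
    show "\<exists>\<xi><\<eta>. \<forall>q. \<xi> \<le> q \<and> q < \<eta> \<longrightarrow> run \<sigma> f0 q c = v" using x h by blast
  next
    fix v' assume "\<exists>\<xi><\<eta>. \<forall>q. \<xi> \<le> q \<and> q < \<eta> \<longrightarrow> run \<sigma> f0 q c = v'"
    then obtain \<xi>' where x': "\<xi>' < \<eta>" "\<forall>q. \<xi>' \<le> q \<and> q < \<eta> \<longrightarrow> run \<sigma> f0 q c = v'" by blast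
    have "max \<xi> \<xi>' < \<eta>" using x x'(1) by simp
    then show "v' = v" using h x'(2) by (metis max.cobounded1 max.cobounded2)
  qed
  have ex: "\<exists>v. \<exists>\<xi><\<eta>. \<forall>q. \<xi> \<le> q \<and> q < \<eta> \<longrightarrow> run \<sigma> f0 q c = v" using x h by blast
  show ?thesis by (simp only: run_lim[OF l] if_P[OF ex] u)
qed

lemma run_lim_nn:
  assumes l: "islim \<eta>" and n: "run \<sigma> f0 \<eta> c \<noteq> None"
  shows "\<exists>\<xi><\<eta>. \<forall>q. \<xi> \<le> q \<and> q < \<eta> \<longrightarrow> run \<sigma> f0 q c = run \<sigma> f0 \<eta> c"
proof -
  have "\<exists>v. \<exists>\<xi><\<eta>. \<forall>q. \<xi> \<le> q \<and> q < \<eta> \<longrightarrow> run \<sigma> f0 q c = v"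
    using n run_lim[OF l, of \<sigma> f0 c] by (auto split: if_splits)
  then obtain v \<xi> where "\<xi> < \<eta>" "\<forall>q. \<xi> \<le> q \<and> q < \<eta> \<longrightarrow> run \<sigma> f0 q c = v" by blast
  then show ?thesis using run_lim_val[OF l] by metis
qed

lemma cases3:
  fixes \<eta> :: "'o::wellorder"
  obtains "\<not> (\<exists>\<xi>. \<xi> < \<eta>)" | p where "p < \<eta>" "\<forall>q<\<eta>. q \<le> p" | "islim \<eta>"
  unfolding islim_def by blast

lemma succ_in_lim:
  fixes l :: "'o::wellorder"
  assumes "islim l" "q < l"
  shows "\<exists>s. q < s \<and> s < l \<and> (\<forall>x<s. x \<le> q)"
proof -
  define s where "s = (LEAST x. q < x)"
  have qs: "q < s" unfolding s_def using assms(2) by (rule LeastI)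
  have sl: "s \<le> l" unfolding s_def using assms(2) by (rule Least_le)
  have b: "\<forall>x<s. x \<le> q" unfolding s_def using not_less_Least not_less by blast
  have "s \<noteq> l" using assms(1) qs b unfolding islim_def by blast
  then show ?thesis using qs sl b by auto
qed

lemma act_apply: "act \<sigma> f c = f (inv \<sigma> c)" by (simp add: act_def)

lemma runU:
  "run \<sigma> (\<lambda>c. Some c) \<eta> c = Some d \<Longrightarrow> run \<sigma> f0 \<eta> c = f0 d"
proof (induction \<eta> arbitrary: c d rule: less_induct)
  case (less \<eta>)
  show ?case
  proof (cases \<eta> rule: cases3)
    case 1 then show ?thesis using less.prems by (simp add: run_bot)
  next
    case (2 p)
    then show ?thesis using less.prems less.IH[of p] by (simp add: run_succ[OF 2] act_apply)
  next
    case 3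
    obtain \<xi> where x: "\<xi> < \<eta>" "\<forall>q. \<xi> \<le> q \<and> q < \<eta> \<longrightarrow> run \<sigma> (\<lambda>c. Some c) q c = Some d"
      using run_lim_nn[OF 3, of \<sigma> "\<lambda>c. Some c" c] less.prems by auto
    have "\<forall>q. \<xi> \<le> q \<and> q < \<eta> \<longrightarrow> run \<sigma> f0 q c = f0 d" using x less.IH by blast
    then show ?thesis using run_lim_val[OF 3 x(1)] by blast
  qed
qed

lemma run_const:
  assumes "\<xi> \<le> \<eta>" "\<forall>q. \<xi> \<le> q \<and> q < \<eta> \<longrightarrow> inj (\<sigma> q) \<and> \<sigma> q c = c"
  shows "run \<sigma> f0 \<eta> c = run \<sigma> f0 \<xi> c"
  using assms
proof (induction \<eta> rule: less_induct)
  case (less \<eta>)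
  show ?case
  proof (cases "\<xi> = \<eta>")
    case True then show ?thesis by simp
  next
    case False
    then have x: "\<xi> < \<eta>" using less.prems by simp
    show ?thesis
    proof (cases \<eta> rule: cases3)
      case 1 then show ?thesis using x by blast
    next
      case (2 p)
      have "\<xi> \<le> p" using 2 x by blast
      then have ip: "run \<sigma> f0 p c = run \<sigma> f0 \<xi> c" using less.IH[of p] 2 less.prems by (meson order.strict_trans)
      have "inj (\<sigma> p) \<and> \<sigma> p c = c" using less.prems 2 \<open>\<xi> \<le> p\<close> by blast
      then have "inv (\<sigma> p) c = c" by (metis inv_f_f)
      then show ?thesis using ip by (simp add: run_succ[OF 2] act_apply)
    next
      case 3
      have "\<forall>q. \<xi> \<le> q \<and> q < \<eta> \<longrightarrow> run \<sigma> f0 q c = run \<sigma> f0 \<xi> c"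
        using less.IH less.prems by (meson order.strict_trans)
      then show ?thesis using run_lim_val[OF 3 x] by blast
    qed
  qed
qed



lemma axis_UNIV: "(UNIV :: axis set) = {AX, AY, AZ}"
  using axis.exhaust by auto

lemma finite_axis: "finite (UNIV :: axis set)"
  by (simp add: axis_UNIV)

lemma cneg_cneg[simp]: "cneg (cneg v) = v" by (cases v) auto

lemma coord_simps[simp]: "coord (a, b, d) AX = a" "coord (a, b, d) AY = b" "coord (a, b, d) AZ = d"
  by (simp_all add: coord_def)

lemma coord_rot_same[simp]: "coord (rot i p) i = coord p i"
  by (cases p; cases i) auto

lemma rot_inj: "rot i p = rot i p' \<Longrightarrow> p = p'"
  by (cases p; cases p'; cases i) (auto dest: arg_cong[where f = cneg])

lemma rot_axis_inj: "rot_axis i m = rot_axis i m' \<Longrightarrow> m = m'"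
  by (cases i; cases m; cases m') auto

lemma rot4: "rot i (rot i (rot i (rot i p))) = p"
  by (cases p; cases i) auto

lemma rot_axis4: "rot_axis i (rot_axis i (rot_axis i (rot_axis i m))) = m"
  by (cases i; cases m) auto

lemma qturn_fst: "fst (qturn i \<alpha> c) = (if coord (fst c) i = \<alpha> then rot i (fst c) else fst c)"
  by (simp add: qturn_def)

lemma qturn4: "qturn i (\<alpha>::'l coord) ^^ 4 = id"
proof
  fix c :: "'l cell"
  obtain p m where c: "c = (p, m)" by fastforce
  show "(qturn i \<alpha> ^^ 4) c = id c"
    by (simp add: c qturn_def numeral_eq_Suc rot4 rot_axis4)
qed

lemma qturn_pow_inv:
  assumes "k \<le> 4"
  shows "inv (qturn i \<alpha> ^^ k) = qturn i \<alpha> ^^ (4 - k)" "bij (qturn i \<alpha> ^^ k)"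
proof -
  have a: "(qturn i \<alpha> ^^ (4 - k)) \<circ> (qturn i \<alpha> ^^ k) = id"
    using assms qturn4[of i \<alpha>] by (metis funpow_add le_add_diff_inverse2)
  have b: "(qturn i \<alpha> ^^ k) \<circ> (qturn i \<alpha> ^^ (4 - k)) = id"
    using assms qturn4[of i \<alpha>] by (metis funpow_add le_add_diff_inverse)
  show "bij (qturn i \<alpha> ^^ k)" using a b by (rule o_bij)
  show "inv (qturn i \<alpha> ^^ k) = qturn i \<alpha> ^^ (4 - k)" using a b by (simp add: inv_unique_comp)
qed

definition isinf :: "'l coord \<Rightarrow> bool" where "isinf v \<longleftrightarrow> v = PInf \<or> v = NInf"

fun isPN :: "'l coord \<Rightarrow> bool" where
  "isPN (Pos _) = True" | "isPN (Neg _) = True" | "isPN _ = False"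

fun sg :: "'l coord \<Rightarrow> int" where
  "sg (Pos _) = 1" | "sg (Neg _) = -1" | "sg Zero = 0" | "sg PInf = 1" | "sg NInf = -1"

fun eps :: "axis \<Rightarrow> axis \<Rightarrow> int" where
  "eps AX AY = 1" | "eps AY AZ = 1" | "eps AZ AX = 1"
| "eps AY AX = -1" | "eps AZ AY = -1" | "eps AX AZ = -1"
| "eps _ _ = 0"

fun Ept :: "'l point \<Rightarrow> bool" where
  "Ept (a, b, d) \<longleftrightarrow> (isPN a \<and> isinf b \<and> isinf d) \<or> (isinf a \<and> isPN b \<and> isinf d) \<or> (isinf a \<and> isinf b \<and> isPN d)"

fun finax :: "'l point \<Rightarrow> axis" where
  "finax (a, b, d) = (if isPN a then AX else if isPN b then AY else AZ)"

fun w :: "'l cell \<Rightarrow> int" where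
  "w ((a, b, d), m) = sg a * sg b * sg d * eps m (finax (a, b, d))"

definition Ecells :: "'l cell set" where "Ecells = {c. c \<in> cells \<and> Ept (fst c)}"

definition Oc :: "'l coord set \<Rightarrow> 'l cell set" where "Oc C = {c. \<forall>ax. coord (fst c) ax \<in> C}"

lemma cells_iff: "(p, m) \<in> cells \<longleftrightarrow> isinf (coord p m)"
  by (simp add: cells_def isinf_def)

lemma rot_cell: "isinf (coord (rot i p) (rot_axis i m)) \<longleftrightarrow> isinf (coord p m)"
  by (cases p; cases i; cases m) (auto simp: isinf_def elim: cneg.elims)

lemma rot_coords: "\<exists>ax'. coord (rot i p) ax = coord p ax' \<or> coord (rot i p) ax = cneg (coord p ax')"
  by (cases p; cases i; cases ax) (auto intro: exI[of _ AX] exI[of _ AY] exI[of _ AZ])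

lemma rot_w1: "a = Pos r \<or> a = Neg r \<Longrightarrow> b = PInf \<or> b = NInf \<Longrightarrow> d = PInf \<or> d = NInf \<Longrightarrow> isinf (coord (a, b, d) m)
   \<Longrightarrow> Ept (rot i (a, b, d)) \<and> w (rot i (a, b, d), rot_axis i m) = w ((a, b, d), m)"
  by (elim disjE; cases i; cases m; simp add: isinf_def)
lemma rot_w2: "a = Pos r \<or> a = Neg r \<Longrightarrow> b = PInf \<or> b = NInf \<Longrightarrow> d = PInf \<or> d = NInf \<Longrightarrow> isinf (coord (b, a, d) m)
   \<Longrightarrow> Ept (rot i (b, a, d)) \<and> w (rot i (b, a, d), rot_axis i m) = w ((b, a, d), m)"
  by (elim disjE; cases i; cases m; simp add: isinf_def)
lemma rot_w3: "a = Pos r \<or> a = Neg r \<Longrightarrow> b = PInf \<or> b = NInf \<Longrightarrow> d = PInf \<or> d = NInf \<Longrightarrow> isinf (coord (b, d, a) m)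
   \<Longrightarrow> Ept (rot i (b, d, a)) \<and> w (rot i (b, d, a), rot_axis i m) = w ((b, d, a), m)"
  by (elim disjE; cases i; cases m; simp add: isinf_def)

lemma isPN_cases: "isPN v \<Longrightarrow> \<exists>r. v = Pos r \<or> v = Neg r" by (cases v) auto

lemma rot_w: "Ept p \<Longrightarrow> isinf (coord p m) \<Longrightarrow> Ept (rot i p) \<and> w (rot i p, rot_axis i m) = w (p, m)"
proof -
  obtain a b d where p: "p = (a, b, d)" by (cases p) auto
  assume e: "Ept p" and m: "isinf (coord p m)"
  from e have "(isPN a \<and> isinf b \<and> isinf d) \<or> (isinf a \<and> isPN b \<and> isinf d) \<or> (isinf a \<and> isinf b \<and> isPN d)"
    by (simp add: p)
  then show ?thesis
  proof (elim disjE conjE)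
    assume "isPN a" "isinf b" "isinf d"
    then show ?thesis using rot_w1[of a _ b d m i] isPN_cases[of a] m unfolding p isinf_def by blast
  next
    assume "isPN b" "isinf a" "isinf d"
    then show ?thesis using rot_w2[of b _ a d m i] isPN_cases[of b] m unfolding p isinf_def by blast
  next
    assume "isPN d" "isinf a" "isinf b"
    then show ?thesis using rot_w3[of d _ a b m i] isPN_cases[of d] m unfolding p isinf_def by blast
  qed
qed

definition goodmap :: "('l cell \<Rightarrow> 'l cell) \<Rightarrow> bool" where
  "goodmap \<pi> \<longleftrightarrow> (\<forall>c c'. fst (\<pi> c) = fst (\<pi> c') \<longleftrightarrow> fst c = fst c') \<and> inj \<pi>
     \<and> (\<forall>c. \<pi> c \<in> cells \<longleftrightarrow> c \<in> cells)
     \<and> (\<forall>C. cneg ` C \<subseteq> C \<longrightarrow> (\<forall>c\<in>Oc C. \<pi> c \<in> Oc C))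
     \<and> (\<forall>c\<in>Ecells. \<pi> c \<in> Ecells \<and> w (\<pi> c) = w c)"

lemma goodmap_id: "goodmap id"
  by (simp add: goodmap_def)

lemma goodmap_comp: "goodmap \<pi> \<Longrightarrow> goodmap \<rho> \<Longrightarrow> goodmap (\<pi> \<circ> \<rho>)"
proof -
  assume a: "goodmap \<pi>" and b: "goodmap \<rho>"
  note A = a[unfolded goodmap_def] and B = b[unfolded goodmap_def]
  show ?thesis unfolding goodmap_def
  proof (intro conjI)
    show "\<forall>c c'. fst ((\<pi> \<circ> \<rho>) c) = fst ((\<pi> \<circ> \<rho>) c') \<longleftrightarrow> fst c = fst c'"
      using A B by (metis comp_apply)
    show "inj (\<pi> \<circ> \<rho>)" using A B by (simp add: inj_compose)
    show "\<forall>c. (\<pi> \<circ> \<rho>) c \<in> cells \<longleftrightarrow> c \<in> cells" using A B by (metis comp_apply)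
    show "\<forall>C. cneg ` C \<subseteq> C \<longrightarrow> (\<forall>c\<in>Oc C. (\<pi> \<circ> \<rho>) c \<in> Oc C)" using A B by (metis comp_apply)
    show "\<forall>c\<in>Ecells. (\<pi> \<circ> \<rho>) c \<in> Ecells \<and> w ((\<pi> \<circ> \<rho>) c) = w c" using A B by (metis comp_apply)
  qed
qed

lemma qturnP_inj:
  fixes p p' :: "'l point"
  assumes h: "(if coord p i = \<alpha> then rot i p else p) = (if coord p' i = \<alpha> then rot i p' else p')"
  shows "p = p'"
proof (cases "coord p i = \<alpha>")
  case T1: True
  show ?thesis
  proof (cases "coord p' i = \<alpha>")
    case True
    then have "rot i p = rot i p'" using h T1 by simp
    then show ?thesis using rot_inj by metis
  next
    case False
    then have "rot i p = p'" using h T1 by simp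
    then have "coord p' i = \<alpha>" using T1 coord_rot_same by metis
    then show ?thesis using False by blast
  qed
next
  case F1: False
  show ?thesis
  proof (cases "coord p' i = \<alpha>")
    case True
    then have "rot i p' = p" using h F1 by simp
    then have "coord p i = \<alpha>" using True coord_rot_same by metis
    then show ?thesis using F1 by blast
  next
    case False
    then show ?thesis using h F1 by simp
  qed
qed

lemma qturn_fst_iff: "fst (qturn i (\<alpha>::'l coord) c) = fst (qturn i \<alpha> c') \<longleftrightarrow> fst c = fst c'"
  unfolding qturn_fst using qturnP_inj by metis

lemma qturn_inj: "inj (qturn i (\<alpha>::'l coord))"
proof (rule injI)
  fix c c' :: "'l cell"
  assume h: "qturn i \<alpha> c = qturn i \<alpha> c'"
  then have f: "fst c = fst c'" using qturn_fst_iff by metis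
  obtain p m p' m' where c: "c = (p, m)" and c': "c' = (p', m')" by fastforce
  have pp: "p = p'" using f c c' by simp
  have "snd (qturn i \<alpha> c) = snd (qturn i \<alpha> c')" using h by simp
  then have "m = m'" unfolding c c' qturn_def pp
    by (cases "coord p' i = \<alpha>") (simp_all add: rot_axis_inj)
  then show "c = c'" using c c' pp by simp
qed

lemma qturn_cells: "qturn i (\<alpha>::'l coord) c \<in> cells \<longleftrightarrow> c \<in> cells"
proof -
  obtain p m where c: "c = (p, m)" by fastforce
  show ?thesis unfolding c qturn_def by (simp add: cells_iff rot_cell)
qed

lemma qturn_Oc: "cneg ` C \<subseteq> C \<Longrightarrow> c \<in> Oc C \<Longrightarrow> qturn i (\<alpha>::'l coord) c \<in> Oc C"
proof -
  assume C: "cneg ` C \<subseteq> C" and cC: "c \<in> Oc C"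
  obtain p m where c: "c = (p, m)" by fastforce
  have "coord (rot i p) ax \<in> C" for ax
    using rot_coords[of i p ax] C cC unfolding c Oc_def by auto
  then show "qturn i \<alpha> c \<in> Oc C" using cC unfolding c qturn_def Oc_def by auto
qed

lemma qturn_E: "c \<in> Ecells \<Longrightarrow> qturn i (\<alpha>::'l coord) c \<in> Ecells \<and> w (qturn i \<alpha> c) = w c"
proof -
  assume cE: "c \<in> Ecells"
  obtain p m where c: "c = (p, m)" by fastforce
  have "Ept p" "isinf (coord p m)" using cE unfolding c Ecells_def by (auto simp: cells_iff)
  note r = rot_w[OF this, of i]
  show "qturn i \<alpha> c \<in> Ecells \<and> w (qturn i \<alpha> c) = w c"
  proof (cases "coord p i = \<alpha>")
    case True
    then have q: "qturn i \<alpha> c = (rot i p, rot_axis i m)" unfolding c qturn_def by simp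
    have ii: "isinf (coord p m)" using cE unfolding c Ecells_def by (simp add: cells_iff)
    have "(rot i p, rot_axis i m) \<in> Ecells" unfolding Ecells_def mem_Collect_eq fst_conv cells_iff
      using r ii rot_cell by blast
    moreover have "w c = w (p, m)" using c by simp
    ultimately show ?thesis unfolding q using r by simp
  next
    case False
    then show ?thesis using cE unfolding c qturn_def by simp
  qed
qed

lemma goodmap_qturn: "goodmap (qturn i (\<alpha>::'l coord))"
  unfolding goodmap_def
proof (intro conjI allI impI ballI)
  show "\<And>c c'. (fst (qturn i \<alpha> c) = fst (qturn i \<alpha> c')) = (fst c = fst c')" by (rule qturn_fst_iff)
  show "inj (qturn i \<alpha>)" by (rule qturn_inj)
  show "\<And>c. (qturn i \<alpha> c \<in> cells) = (c \<in> cells)" by (rule qturn_cells)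
  show "\<And>C c. cneg ` C \<subseteq> C \<Longrightarrow> c \<in> Oc C \<Longrightarrow> qturn i \<alpha> c \<in> Oc C" by (rule qturn_Oc)
  show "\<And>c. c \<in> Ecells \<Longrightarrow> qturn i \<alpha> c \<in> Ecells" using qturn_E by blast
  show "\<And>c. c \<in> Ecells \<Longrightarrow> w (qturn i \<alpha> c) = w c" using qturn_E by blast
qed

lemma goodmap_pow: "goodmap (qturn i \<alpha> ^^ n)"
proof (induction n)
  case 0 show ?case by (subst funpow.simps(1)) (rule goodmap_id)
next
  case (Suc n) show ?case by (subst funpow.simps(2)) (rule goodmap_comp[OF goodmap_qturn Suc.IH])
qed

definition btw :: "('l cell \<Rightarrow> 'l cell) \<Rightarrow> bool" where
  "btw \<tau> \<longleftrightarrow> bij \<tau> \<and> goodmap \<tau> \<and> goodmap (inv \<tau>)"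

lemma basic_btw: "\<tau> \<in> basic_twists \<Longrightarrow> btw \<tau>"
proof -
  assume "\<tau> \<in> basic_twists"
  then obtain i \<alpha> k where t: "\<tau> = qturn i \<alpha> ^^ k" and k: "k \<in> {1, 2, 3}" unfolding basic_twists_def by blast
  have k4: "k \<le> 4" using k by auto
  show ?thesis unfolding btw_def t qturn_pow_inv(1)[OF k4] using qturn_pow_inv(2)[OF k4] goodmap_pow by blast
qed



lemma color_eq:
  "isinf (coord Q n) \<Longrightarrow> isinf (coord Q' n') \<Longrightarrow> f_solved (Q, n) = f_solved (Q', n') \<Longrightarrow> n = n' \<and> coord Q n = coord Q' n'"
  by (cases n; cases n'; auto simp: f_solved_def isinf_def)

lemma ax_other: "\<exists>c::axis. c \<noteq> a \<and> c \<noteq> b"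
  by (cases a; cases b) (auto intro: exI[of _ AX] exI[of _ AY] exI[of _ AZ])

lemma ax_third: "(a::axis) \<noteq> b \<Longrightarrow> x \<noteq> a \<Longrightarrow> x \<noteq> b \<Longrightarrow> y \<noteq> a \<Longrightarrow> y \<noteq> b \<Longrightarrow> x = y"
  by (cases a; cases b; cases x; cases y) auto

lemma ax_cover: "(a::axis) \<noteq> b \<Longrightarrow> a \<noteq> c \<Longrightarrow> b \<noteq> c \<Longrightarrow> n = a \<or> n = b \<or> n = c"
  by (cases a; cases b; cases c; cases n) auto

lemma pt_eq: "(\<And>n. coord Q n = coord Q' n) \<Longrightarrow> Q = Q'"
proof -
  assume h: "\<And>n. coord Q n = coord Q' n"
  obtain a b d where Q: "Q = (a, b, d)" by (cases Q) auto
  obtain a' b' d' where Q': "Q' = (a', b', d')" by (cases Q') auto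
  show ?thesis using h[of AX] h[of AY] h[of AZ] by (simp add: Q Q')
qed

lemma flip_w:
  assumes "(n1::axis) \<noteq> n2" "n1 \<noteq> n3" "n2 \<noteq> n3"
    "isinf (coord Q n1)" "isinf (coord Q n2)" "coord Q' n1 = coord Q n1" "coord Q' n2 = coord Q n2"
    "(coord Q n3 = Pos r \<and> coord Q' n3 = Neg r) \<or> (coord Q n3 = Neg r \<and> coord Q' n3 = Pos r)"
  shows "w (Q', n1) \<noteq> w (Q, n1)"
proof -
  obtain a b d where Q: "Q = (a, b, d)" by (cases Q) auto
  obtain a' b' d' where Q': "Q' = (a', b', d')" by (cases Q') auto
  show ?thesis using assms unfolding Q Q'
    by (cases n1; cases n2; cases n3; auto simp: isinf_def)
qed

lemma goodmap_fst: "goodmap \<pi> \<Longrightarrow> fst (\<pi> c) = fst (\<pi> c') \<longleftrightarrow> fst c = fst c'"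
  unfolding goodmap_def by (elim conjE) (simp only:)
lemma goodmap_inj: "goodmap \<pi> \<Longrightarrow> inj \<pi>"
  unfolding goodmap_def by (elim conjE) (simp only:)
lemma goodmap_cells: "goodmap \<pi> \<Longrightarrow> \<pi> c \<in> cells \<longleftrightarrow> c \<in> cells"
  unfolding goodmap_def by (elim conjE) (simp only:)
lemma goodmap_Oc: "goodmap \<pi> \<Longrightarrow> cneg ` C \<subseteq> C \<Longrightarrow> c \<in> Oc C \<Longrightarrow> \<pi> c \<in> Oc C"
  unfolding goodmap_def by (elim conjE) (simp only:)
lemma goodmap_E: "goodmap \<pi> \<Longrightarrow> c \<in> Ecells \<Longrightarrow> \<pi> c \<in> Ecells \<and> w (\<pi> c) = w c"
  unfolding goodmap_def by (elim conjE) (simp only:)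

lemma key:
  fixes \<pi> \<pi>' :: "'l cell \<Rightarrow> 'l cell" and p0 :: "'l point" and \<alpha> :: "'l coord"
  assumes gp: "goodmap \<pi>" and gp': "goodmap \<pi>'"
    and col: "\<And>m. (p0, m) \<in> cells \<Longrightarrow> f_solved (\<pi>' (p0, m)) = f_solved (\<pi> (p0, m))"
    and neq: "fst (\<pi>' (p0, m1)) \<noteq> fst (\<pi> (p0, m1))"
    and m12: "m1 \<noteq> m2" "(p0, m1) \<in> cells" "(p0, m2) \<in> cells"
    and inC: "(p0, m1) \<in> Oc {\<alpha>, cneg \<alpha>, PInf, NInf}"
    and wE: "\<alpha> \<notin> {Zero, PInf, NInf} \<Longrightarrow> w (\<pi>' (p0, m1)) = w (\<pi> (p0, m1))"
  shows False
proof -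
  define Q where "Q = fst (\<pi> (p0, m1))"
  define Q' where "Q' = fst (\<pi>' (p0, m1))"
  define A where "A m = snd (\<pi> (p0, m))" for m
  define A' where "A' m = snd (\<pi>' (p0, m))" for m
  have fQ: "fst (\<pi> (p0, m)) = Q" for m unfolding Q_def using goodmap_fst[OF gp, of "(p0, m)" "(p0, m1)"] by simp
  have fQ': "fst (\<pi>' (p0, m)) = Q'" for m unfolding Q'_def using goodmap_fst[OF gp', of "(p0, m)" "(p0, m1)"] by simp
  have pe: "\<pi> (p0, m) = (Q, A m)" for m by (rule prod_eqI) (simp_all add: fQ A_def)
  have pe': "\<pi>' (p0, m) = (Q', A' m)" for m by (rule prod_eqI) (simp_all add: fQ' A'_def)
  have Ainj: "A m = A m' \<Longrightarrow> m = m'" for m m'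
  proof -
    assume "A m = A m'"
    then have "\<pi> (p0, m) = \<pi> (p0, m')" unfolding pe by simp
    then have "(p0, m) = (p0, m')" using goodmap_inj[OF gp] by (simp add: inj_eq)
    then show ?thesis by simp
  qed
  have A'inj: "A' m = A' m' \<Longrightarrow> m = m'" for m m'
  proof -
    assume "A' m = A' m'"
    then have "\<pi>' (p0, m) = \<pi>' (p0, m')" unfolding pe' by simp
    then have "(p0, m) = (p0, m')" using goodmap_inj[OF gp'] by (simp add: inj_eq)
    then show ?thesis by simp
  qed
  have cQ: "(Q, A m) \<in> cells \<longleftrightarrow> (p0, m) \<in> cells" for m using goodmap_cells[OF gp, of "(p0, m)"] pe[of m] by simp
  have cQ': "(Q', A' m) \<in> cells \<longleftrightarrow> (p0, m) \<in> cells" for m using goodmap_cells[OF gp', of "(p0, m)"] pe'[of m] by simp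
  have agree: "A' m = A m \<and> coord Q' (A m) = coord Q (A m)" if "(p0, m) \<in> cells" for m
  proof -
    have "isinf (coord Q' (A' m))" "isinf (coord Q (A m))" using cQ cQ' that by (auto simp: cells_iff)
    moreover have "f_solved (Q', A' m) = f_solved (Q, A m)" using col[OF that] unfolding pe pe' .
    ultimately have "A' m = A m \<and> coord Q' (A' m) = coord Q (A m)" by (rule color_eq)
    then show ?thesis by metis
  qed
  obtain m3 where m3: "m3 \<noteq> m1" "m3 \<noteq> m2" using ax_other by blast
  have a1: "A' m1 = A m1" "coord Q' (A m1) = coord Q (A m1)" using agree[OF m12(2)] by simp_all
  have a2: "A' m2 = A m2" "coord Q' (A m2) = coord Q (A m2)" using agree[OF m12(3)] by simp_all
  have d12: "A m1 \<noteq> A m2" using Ainj m12(1) by blast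
  have d3: "A m3 \<noteq> A m1" "A m3 \<noteq> A m2" using Ainj m3 by blast+
  have a3: "A' m3 = A m3"
  proof -
    have "A' m3 \<noteq> A m1" using A'inj m3(1) a1(1) by metis
    moreover have "A' m3 \<noteq> A m2" using A'inj m3(2) a2(1) by metis
    ultimately show ?thesis using ax_third[OF d12 d3] by metis
  qed
  have cover: "n = A m1 \<or> n = A m2 \<or> n = A m3" for n using ax_cover[OF d12 d3(1)[symmetric] d3(2)[symmetric]] by blast
  have QQ: "Q' \<noteq> Q" using neq unfolding Q_def Q'_def .
  have eq3: "coord Q' (A m3) \<noteq> coord Q (A m3)"
  proof
    assume h3: "coord Q' (A m3) = coord Q (A m3)"
    have "coord Q' n = coord Q n" for n
      using cover[of n] a1(2) a2(2) h3 by (elim disjE) simp_all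
    then have "Q' = Q" by (rule pt_eq)
    then show False using QQ by simp
  qed
  define C where "C = {\<alpha>, cneg \<alpha>, PInf, NInf}"
  have Ccl: "cneg ` C \<subseteq> C" unfolding C_def by auto
  have o1: "(Q, A m1) \<in> Oc C" using goodmap_Oc[OF gp Ccl inC[folded C_def]] unfolding pe .
  have o2: "(Q', A' m1) \<in> Oc C" using goodmap_Oc[OF gp' Ccl inC[folded C_def]] unfolding pe' .
  have QC: "coord Q n \<in> C" "coord Q' n \<in> C" for n using o1 o2 unfolding Oc_def by simp_all
  show False
  proof (cases "(p0, m3) \<in> cells")
    case True
    then show False using agree[OF True] a3 eq3 by simp
  next
    case False
    have ni: "\<not> isinf (coord Q (A m3))" "\<not> isinf (coord Q' (A m3))"
      using cQ[of m3] cQ'[of m3] False a3 by (simp_all add: cells_iff)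
    have v: "coord Q (A m3) \<in> {\<alpha>, cneg \<alpha>}" "coord Q' (A m3) \<in> {\<alpha>, cneg \<alpha>}"
      using QC[of "A m3"] ni unfolding C_def isinf_def by auto
    have "isinf (coord Q (A m1))" "isinf (coord Q (A m2))" using cQ m12 by (simp_all add: cells_iff)
    note fl = flip_w[OF d12 d3(1)[symmetric] d3(2)[symmetric] this a1(2) a2(2)]
    show False
    proof (cases \<alpha>)
      case (Pos r)
      then have "(coord Q (A m3) = Pos r \<and> coord Q' (A m3) = Neg r) \<or> (coord Q (A m3) = Neg r \<and> coord Q' (A m3) = Pos r)"
        using v eq3 by auto
      then show False using fl wE unfolding pe pe' a1(1) Pos by simp
    next
      case (Neg r)
      then have "(coord Q (A m3) = Pos r \<and> coord Q' (A m3) = Neg r) \<or> (coord Q (A m3) = Neg r \<and> coord Q' (A m3) = Pos r)"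
        using v eq3 by auto
      then show False using fl wE unfolding pe pe' a1(1) Neg by simp
    next
      case Zero then show False using v eq3 by simp
    next
      case PInf then show False using v ni by (auto simp: isinf_def)
    next
      case NInf then show False using v ni by (auto simp: isinf_def)
    qed
  qed
qed



definition mkp :: "axis \<Rightarrow> 'l coord \<Rightarrow> 'l point" where
  "mkp i \<alpha> = (case i of AX \<Rightarrow> (\<alpha>, PInf, PInf) | AY \<Rightarrow> (PInf, \<alpha>, PInf) | AZ \<Rightarrow> (PInf, PInf, \<alpha>))"

definition ma :: "axis \<Rightarrow> axis" where "ma i = (case i of AX \<Rightarrow> AY | AY \<Rightarrow> AZ | AZ \<Rightarrow> AX)"
definition mb :: "axis \<Rightarrow> axis" where "mb i = (case i of AX \<Rightarrow> AZ | AY \<Rightarrow> AX | AZ \<Rightarrow> AY)"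

lemma mkp_facts:
  "ma i \<noteq> mb i" "(mkp i \<alpha>, ma i) \<in> cells" "(mkp i \<alpha>, mb i) \<in> cells"
  "(mkp i \<alpha>, m) \<in> Oc {\<alpha>, cneg \<alpha>, PInf, NInf}"
  by (cases i; simp add: ma_def mb_def mkp_def cells_iff isinf_def Oc_def; auto simp: coord_def split: axis.splits)+

lemma mkp_E: "\<alpha> \<notin> {Zero, PInf, NInf} \<Longrightarrow> (mkp i \<alpha>, ma i) \<in> Ecells"
  by (cases \<alpha>; cases i) (auto simp: ma_def mkp_def Ecells_def cells_iff isinf_def)

lemma mkp_moves:
  assumes "j \<in> {1, 2, 3::nat}"
  shows "fst ((qturn i \<alpha> ^^ j) (mkp i \<alpha>, m)) \<noteq> mkp i \<alpha>"
  using assms by (cases i; cases m; auto simp: qturn_def mkp_def numeral_eq_Suc)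

lemma common_bound:
  fixes l :: "'o::wellorder"
  assumes fin: "finite Ob" and x0: "x0 < l"
    and h: "\<forall>c\<in>Ob. \<exists>\<xi><l. \<forall>q. \<xi> \<le> q \<and> q < l \<longrightarrow> P c q"
  shows "\<exists>\<xi><l. \<forall>c\<in>Ob. \<forall>q. \<xi> \<le> q \<and> q < l \<longrightarrow> P c q"
proof -
  obtain f where f: "\<forall>c\<in>Ob. f c < l \<and> (\<forall>q. f c \<le> q \<and> q < l \<longrightarrow> P c q)"
    using h by metis
  define M where "M = Max (insert x0 (f ` Ob))"
  have fM: "finite (insert x0 (f ` Ob))" using fin by simp
  have "M \<in> insert x0 (f ` Ob)" unfolding M_def using fM by (rule Max_in) simp
  then have Ml: "M < l" using x0 f by auto
  have "f c \<le> M" if "c \<in> Ob" for c unfolding M_def using fM that by (simp add: Max_ge)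
  then show ?thesis using Ml f by (meson order.trans)
qed

lemma none_prop:
  fixes \<sigma> :: "'o::wellorder \<Rightarrow> 'l cell \<Rightarrow> 'l cell"
  assumes fin: "finite Ob" and inv: "\<forall>q<\<theta>. inj (\<sigma> q) \<and> (\<forall>c\<in>Ob. \<sigma> q c \<in> Ob)"
    and c: "c \<in> Ob" "run \<sigma> f0 \<xi> c = None"
  shows "\<xi> \<le> \<eta> \<Longrightarrow> \<eta> \<le> \<theta> \<Longrightarrow> \<exists>c\<in>Ob. run \<sigma> f0 \<eta> c = None"
proof (induction \<eta> rule: less_induct)
  case (less \<eta>)
  show ?case
  proof (cases "\<xi> = \<eta>")
    case True then show ?thesis using c by blast
  next
    case False
    then have x: "\<xi> < \<eta>" using less.prems by simp
    show ?thesis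
    proof (cases \<eta> rule: cases3)
      case 1 then show ?thesis using x by blast
    next
      case (2 p)
      have "\<xi> \<le> p" using 2 x by blast
      then obtain d where d: "d \<in> Ob" "run \<sigma> f0 p d = None" using less.IH[of p] 2 less.prems by force
      have pt: "p < \<theta>" using 2 less.prems by simp
      have i1: "\<sigma> p d \<in> Ob" "inv (\<sigma> p) (\<sigma> p d) = d" using inv pt d(1) by (auto simp: inv_f_f)
      then have "run \<sigma> f0 \<eta> (\<sigma> p d) = None" using d by (simp add: run_succ[OF 2] act_apply)
      then show ?thesis using i1(1) by blast
    next
      case 3
      show ?thesis
      proof (rule ccontr)
        assume nn: "\<not> (\<exists>c\<in>Ob. run \<sigma> f0 \<eta> c = None)"
        have "\<forall>c\<in>Ob. \<exists>\<xi><\<eta>. \<forall>q. \<xi> \<le> q \<and> q < \<eta> \<longrightarrow> run \<sigma> f0 q c = run \<sigma> f0 \<eta> c"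
        proof
          fix e assume e: "e \<in> Ob"
          have "run \<sigma> f0 \<eta> e \<noteq> None"
          proof
            assume "run \<sigma> f0 \<eta> e = None"
            then show False using nn e by blast
          qed
          then show "\<exists>\<xi><\<eta>. \<forall>q. \<xi> \<le> q \<and> q < \<eta> \<longrightarrow> run \<sigma> f0 q e = run \<sigma> f0 \<eta> e"
            by (rule run_lim_nn[OF 3])
        qed
        then obtain \<xi>' where x': "\<xi>' < \<eta>" "\<forall>c\<in>Ob. \<forall>q. \<xi>' \<le> q \<and> q < \<eta> \<longrightarrow> run \<sigma> f0 q c = run \<sigma> f0 \<eta> c"
          using common_bound[OF fin x, where P = "\<lambda>c q. run \<sigma> f0 q c = run \<sigma> f0 \<eta> c"] by blast
        define m where "m = max \<xi> \<xi>'"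
        have m: "\<xi> \<le> m" "\<xi>' \<le> m" "m < \<eta>" using x x'(1) by (auto simp: m_def)
        have "m \<le> \<theta>" using m(3) less.prems by simp
        then obtain d where d: "d \<in> Ob" "run \<sigma> f0 m d = None" using less.IH[OF m(3) m(1)] by blast
        have "run \<sigma> f0 m d = run \<sigma> f0 \<eta> d" using x'(2) d(1) m by blast
        then have "run \<sigma> f0 \<eta> d = None" using d(2) by simp
        then show False using d(1) nn by metis
      qed
    qed
  qed
qed

lemma repr:
  fixes \<sigma> :: "'o::wellorder \<Rightarrow> 'l cell \<Rightarrow> 'l cell"
  assumes fin: "finite Ob" and bt: "\<forall>q<\<theta>. btw (\<sigma> q)"
    and Oinv: "\<And>\<pi> c. goodmap \<pi> \<Longrightarrow> c \<in> Ob \<Longrightarrow> \<pi> c \<in> Ob"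
    and leg: "\<forall>\<eta>\<le>\<theta>. \<forall>c\<in>Ob. run \<sigma> f0 \<eta> c \<noteq> None"
  shows "\<eta> \<le> \<theta> \<Longrightarrow> \<exists>\<pi>. goodmap \<pi> \<and> (\<forall>c\<in>Ob. run \<sigma> f0 \<eta> c = f0 (\<pi> c))"
proof (induction \<eta> rule: less_induct)
  case (less \<eta>)
  show ?case
  proof (cases \<eta> rule: cases3)
    case 1
    have "goodmap (\<lambda>a::'l cell. a)" using goodmap_id by (simp add: id_def)
    then show ?thesis by (intro exI[of _ "\<lambda>a. a"]) (simp add: run_bot[OF 1])
  next
    case (2 p)
    have pt: "p < \<theta>" "p \<le> \<theta>" using 2 less.prems by simp_all
    obtain \<pi> where \<pi>: "goodmap \<pi>" "\<forall>c\<in>Ob. run \<sigma> f0 p c = f0 (\<pi> c)"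
      using less.IH[OF 2(1) pt(2)] by blast
    have g: "goodmap (inv (\<sigma> p))" using bt pt(1) by (simp add: btw_def)
    have "\<forall>c\<in>Ob. run \<sigma> f0 \<eta> c = f0 ((\<pi> \<circ> inv (\<sigma> p)) c)"
    proof
      fix c assume c: "c \<in> Ob"
      have "inv (\<sigma> p) c \<in> Ob" using Oinv[OF g c] .
      then show "run \<sigma> f0 \<eta> c = f0 ((\<pi> \<circ> inv (\<sigma> p)) c)"
        using \<pi>(2) by (simp add: run_succ[OF 2] act_apply)
    qed
    then show ?thesis using goodmap_comp[OF \<pi>(1) g] by blast
  next
    case 3
    have "\<forall>c\<in>Ob. \<exists>\<xi><\<eta>. \<forall>q. \<xi> \<le> q \<and> q < \<eta> \<longrightarrow> run \<sigma> f0 q c = run \<sigma> f0 \<eta> c"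
    proof
      fix e assume e: "e \<in> Ob"
      have "run \<sigma> f0 \<eta> e \<noteq> None" using leg less.prems e by simp
      then show "\<exists>\<xi><\<eta>. \<forall>q. \<xi> \<le> q \<and> q < \<eta> \<longrightarrow> run \<sigma> f0 q e = run \<sigma> f0 \<eta> e"
        by (rule run_lim_nn[OF 3])
    qed
    moreover obtain x0 where "x0 < \<eta>" using 3 unfolding islim_def by blast
    ultimately obtain \<xi>' where x': "\<xi>' < \<eta>" "\<forall>c\<in>Ob. \<forall>q. \<xi>' \<le> q \<and> q < \<eta> \<longrightarrow> run \<sigma> f0 q c = run \<sigma> f0 \<eta> c"
      using common_bound[OF fin, where P = "\<lambda>c q. run \<sigma> f0 q c = run \<sigma> f0 \<eta> c"] by blast
    have "\<xi>' \<le> \<theta>" using x'(1) less.prems by simp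
    then obtain \<pi> where \<pi>: "goodmap \<pi>" "\<forall>c\<in>Ob. run \<sigma> f0 \<xi>' c = f0 (\<pi> c)"
      using less.IH[OF x'(1)] by blast
    have "\<forall>c\<in>Ob. run \<sigma> f0 \<eta> c = f0 (\<pi> c)"
    proof
      fix c assume c: "c \<in> Ob"
      have "run \<sigma> f0 \<xi>' c = run \<sigma> f0 \<eta> c" using x' c by blast
      then show "run \<sigma> f0 \<eta> c = f0 (\<pi> c)" using \<pi>(2) c by simp
    qed
    then show ?thesis using \<pi>(1) by blast
  qed
qed

lemma pow_fix: "f c = c \<Longrightarrow> (f ^^ k) c = c"
  by (induction k) auto

lemma moving_finite: "finite {\<tau> \<in> basic_twists. \<tau> c \<noteq> c}"
proof -
  have "{\<tau> \<in> basic_twists. \<tau> c \<noteq> c} \<subseteq> (\<lambda>(i, k). qturn i (coord (fst c) i) ^^ k) ` (UNIV \<times> {1, 2, 3::nat})"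
  proof
    fix \<tau> assume "\<tau> \<in> {\<tau> \<in> basic_twists. \<tau> c \<noteq> c}"
    then obtain i \<alpha> k where t: "\<tau> = qturn i \<alpha> ^^ k" "k \<in> {1, 2, 3}" "\<tau> c \<noteq> c"
      unfolding basic_twists_def by blast
    have "\<alpha> = coord (fst c) i"
    proof (rule ccontr)
      assume "\<alpha> \<noteq> coord (fst c) i"
      then have "qturn i \<alpha> c = c" by (simp add: qturn_def)
      then show False using t pow_fix by metis
    qed
    then show "\<tau> \<in> (\<lambda>(i, k). qturn i (coord (fst c) i) ^^ k) ` (UNIV \<times> {1, 2, 3::nat})"
      using t by force
  qed
  moreover have "finite ((\<lambda>(i, k). qturn i (coord (fst c) i) ^^ k) ` (UNIV \<times> {1, 2, 3::nat}))"
    using finite_axis by simp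
  ultimately show ?thesis by (rule finite_subset)
qed

lemma tf_legal:
  fixes \<sigma> :: "'o::wellorder \<Rightarrow> 'l cell \<Rightarrow> 'l cell"
  assumes bs: "basic_sequence \<sigma> \<theta>" and tf: "twist_finite \<sigma> \<theta>" and f0: "\<forall>c. f0 c \<noteq> None"
  shows "\<eta> \<le> \<theta> \<Longrightarrow> \<forall>c. run \<sigma> f0 \<eta> c \<noteq> None"
proof (induction \<eta> rule: less_induct)
  case (less \<eta>)
  show ?case
  proof (cases \<eta> rule: cases3)
    case 1 then show ?thesis using f0 by (simp add: run_bot)
  next
    case (2 p)
    have "p \<le> \<theta>" using 2 less.prems by simp
    then have ih: "\<forall>c. run \<sigma> f0 p c \<noteq> None" using less.IH[OF 2(1)] by blast
    show ?thesis
    proof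
      fix c show "run \<sigma> f0 \<eta> c \<noteq> None" using ih[rule_format, of "inv (\<sigma> p) c"] by (simp add: run_succ[OF 2] act_apply)
    qed
  next
    case 3
    show ?thesis
    proof
      fix c
      define M where "M = {q. q < \<eta> \<and> \<sigma> q c \<noteq> c}"
      have "M \<subseteq> (\<Union>\<tau>\<in>{\<tau> \<in> basic_twists. \<tau> c \<noteq> c}. {q. q < \<theta> \<and> \<sigma> q = \<tau>})"
      proof
        fix q assume "q \<in> M"
        then have q: "q < \<eta>" "\<sigma> q c \<noteq> c" unfolding M_def by simp_all
        then have qt: "q < \<theta>" using less.prems by simp
        then have "\<sigma> q \<in> basic_twists" using bs unfolding basic_sequence_def by simp
        then show "q \<in> (\<Union>\<tau>\<in>{\<tau> \<in> basic_twists. \<tau> c \<noteq> c}. {q. q < \<theta> \<and> \<sigma> q = \<tau>})"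
          using q qt by blast
      qed
      moreover have "finite (\<Union>\<tau>\<in>{\<tau> \<in> basic_twists. \<tau> c \<noteq> c}. {q. q < \<theta> \<and> \<sigma> q = \<tau>})"
        using moving_finite tf unfolding twist_finite_def by blast
      ultimately have finM: "finite M" by (rule finite_subset)
      have injq: "q < \<eta> \<Longrightarrow> inj (\<sigma> q)" for q
      proof -
        assume "q < \<eta>"
        then have "q < \<theta>" using less.prems by simp
        then have "\<sigma> q \<in> basic_twists" using bs unfolding basic_sequence_def by simp
        then show "inj (\<sigma> q)" using basic_btw unfolding btw_def by (blast intro: bij_is_inj)
      qed
      obtain s where s: "s < \<eta>" "\<forall>q. s \<le> q \<and> q < \<eta> \<longrightarrow> \<sigma> q c = c"
      proof (cases "M = {}")
        case True
        obtain x0 where "x0 < \<eta>" using 3 unfolding islim_def by blast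
        then show ?thesis using that True unfolding M_def by blast
      next
        case False
        define m where "m = Max M"
        have "m \<in> M" unfolding m_def using finM False by (rule Max_in)
        then have mh: "m < \<eta>" unfolding M_def by simp
        obtain s where s: "m < s" "s < \<eta>" "\<forall>x<s. x \<le> m" using succ_in_lim[OF 3 mh] by blast
        have "\<forall>q. s \<le> q \<and> q < \<eta> \<longrightarrow> \<sigma> q c = c"
        proof (intro allI impI)
          fix q assume q: "s \<le> q \<and> q < \<eta>"
          show "\<sigma> q c = c"
          proof (rule ccontr)
            assume "\<sigma> q c \<noteq> c"
            then have "q \<in> M" using q unfolding M_def by simp
            then have "q \<le> m" unfolding m_def using finM by (simp add: Max_ge)
            moreover have "m < q" using s(1) q by (blast intro: less_le_trans)
            ultimately show False by simp
          qed
        qed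
        then show ?thesis using that s(2) by blast
      qed
      have "run \<sigma> f0 \<eta> c = run \<sigma> f0 s c"
        using run_const[of s \<eta> \<sigma> c f0] s injq by (simp add: less_imp_le)
      moreover have "run \<sigma> f0 s c \<noteq> None"
      proof -
        have "s \<le> \<theta>" using s(1) less.prems by simp
        then have "\<forall>c. run \<sigma> f0 s c \<noteq> None" using less.IH[OF s(1)] by blast
        then show ?thesis by blast
      qed
      ultimately show "run \<sigma> f0 \<eta> c \<noteq> None" by simp
    qed
  qed
qed



lemma finite_Ob:
  fixes C :: "'l coord set"
  assumes "finite C"
  shows "finite (cells \<inter> Oc C)"
proof -
  have "cells \<inter> Oc C \<subseteq> (C \<times> C \<times> C) \<times> UNIV"
  proof
    fix c :: "'l cell" assume c: "c \<in> cells \<inter> Oc C"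
    obtain a b d m where cc: "c = ((a, b, d), m)" by (metis prod.collapse)
    have "\<forall>ax. coord (a, b, d) ax \<in> C" using c unfolding cc Oc_def by simp
    then have "coord (a, b, d) AX \<in> C" "coord (a, b, d) AY \<in> C" "coord (a, b, d) AZ \<in> C" by blast+
    then show "c \<in> (C \<times> C \<times> C) \<times> UNIV" unfolding cc by simp
  qed
  moreover have "finite ((C \<times> C \<times> C) \<times> (UNIV :: axis set))" using assms finite_axis by simp
  ultimately show ?thesis by (rule finite_subset)
qed

lemma hard:
  fixes \<sigma> :: "'o::wellorder \<Rightarrow> 'l cell \<Rightarrow> 'l cell" and \<theta> :: 'o
  assumes bs: "basic_sequence \<sigma> \<theta>" and conv: "convergent_over \<sigma> \<theta> f_solved"
  shows "twist_finite \<sigma> \<theta>"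
proof (rule ccontr)
  assume "\<not> twist_finite \<sigma> \<theta>"
  then obtain \<tau> where t: "\<tau> \<in> basic_twists" "infinite {\<eta>. \<eta> < \<theta> \<and> \<sigma> \<eta> = \<tau>}"
    unfolding twist_finite_def by blast
  then obtain i \<alpha> k where tk: "\<tau> = qturn i \<alpha> ^^ k" "k \<in> {1, 2, 3::nat}" unfolding basic_twists_def by blast
  define occ where "occ x = {\<eta>. \<eta> < x \<and> \<sigma> \<eta> = \<tau>}" for x
  define l where "l = (LEAST x. x \<le> \<theta> \<and> infinite (occ x))"
  have th: "\<theta> \<le> \<theta> \<and> infinite (occ \<theta>)" using t(2) unfolding occ_def by simp
  have l1: "l \<le> \<theta> \<and> infinite (occ l)" unfolding l_def using th by (rule LeastI)
  have l2: "finite (occ x)" if "x < l" for x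
  proof -
    have "\<not> (x \<le> \<theta> \<and> infinite (occ x))" using not_less_Least[OF that[unfolded l_def]] unfolding l_def .
    moreover have "x \<le> \<theta>" using less_imp_le[OF that] l1 by (blast intro: order.trans)
    ultimately show ?thesis by blast
  qed
  have ne: "occ l \<noteq> {}" using l1 by auto
  have lim: "islim l"
    unfolding islim_def
  proof
    show "\<exists>\<xi>. \<xi> < l" using ne unfolding occ_def by blast
    show "\<not> (\<exists>p<l. \<forall>q<l. q \<le> p)"
    proof
      assume "\<exists>p<l. \<forall>q<l. q \<le> p"
      then obtain p where p: "p < l" "\<forall>q<l. q \<le> p" by blast
      have "occ l \<subseteq> insert p (occ p)" unfolding occ_def using p by (auto simp: order.order_iff_strict)
      then have "finite (occ l)" using l2[OF p(1)] by (simp add: finite_subset)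
      then show False using l1 by simp
    qed
  qed
  have cof: "\<exists>q. \<xi> \<le> q \<and> q < l \<and> \<sigma> q = \<tau>" if "\<xi> < l" for \<xi>
  proof (rule ccontr)
    assume "\<not> (\<exists>q. \<xi> \<le> q \<and> q < l \<and> \<sigma> q = \<tau>)"
    then have "occ l \<subseteq> occ \<xi>" unfolding occ_def by (auto simp: not_le)
    then have "finite (occ l)" using l2[OF that] by (simp add: finite_subset)
    then show False using l1 by simp
  qed
  define C where "C = {\<alpha>, cneg \<alpha>, PInf, NInf}"
  have Ccl: "cneg ` C \<subseteq> C" unfolding C_def by auto
  define Ob where "Ob = cells \<inter> Oc C"
  have finO: "finite Ob" unfolding Ob_def by (rule finite_Ob) (simp add: C_def)
  have Oinv: "\<pi> c \<in> Ob" if "goodmap \<pi>" "c \<in> Ob" for \<pi> c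
    using goodmap_cells[OF that(1)] goodmap_Oc[OF that(1) Ccl] that(2) unfolding Ob_def by blast
  have bt: "\<forall>q<\<theta>. btw (\<sigma> q)" using bs basic_btw unfolding basic_sequence_def by blast
  have inv1: "\<forall>q<\<theta>. inj (\<sigma> q) \<and> (\<forall>c\<in>Ob. \<sigma> q c \<in> Ob)"
    using bt Oinv unfolding btw_def by (blast intro: bij_is_inj)
  have leg: "\<forall>\<eta>\<le>\<theta>. \<forall>c\<in>Ob. run \<sigma> f_solved \<eta> c \<noteq> None"
  proof (intro allI impI ballI)
    fix \<eta> c assume e: "\<eta> \<le> \<theta>" and c: "c \<in> Ob"
    show "run \<sigma> f_solved \<eta> c \<noteq> None"
    proof
      assume "run \<sigma> f_solved \<eta> c = None"
      then obtain d where "d \<in> Ob" "run \<sigma> f_solved \<theta> d = None"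
        using none_prop[OF finO inv1 c _ e order.refl] by blast
      then show False using conv unfolding convergent_over_def Ob_def by blast
    qed
  qed
  have "\<forall>c\<in>Ob. \<exists>\<xi><l. \<forall>q. \<xi> \<le> q \<and> q < l \<longrightarrow> run \<sigma> f_solved q c = run \<sigma> f_solved l c"
  proof
    fix e assume e: "e \<in> Ob"
    have "run \<sigma> f_solved l e \<noteq> None" using leg l1 e by simp
    then show "\<exists>\<xi><l. \<forall>q. \<xi> \<le> q \<and> q < l \<longrightarrow> run \<sigma> f_solved q e = run \<sigma> f_solved l e"
      by (rule run_lim_nn[OF lim])
  qed
  moreover obtain x0 where "x0 < l" using lim unfolding islim_def by blast
  ultimately obtain \<xi>' where x': "\<xi>' < l" "\<forall>c\<in>Ob. \<forall>q. \<xi>' \<le> q \<and> q < l \<longrightarrow> run \<sigma> f_solved q c = run \<sigma> f_solved l c"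
    using common_bound[OF finO, where P = "\<lambda>c q. run \<sigma> f_solved q c = run \<sigma> f_solved l c"] by blast
  obtain q where q: "\<xi>' \<le> q" "q < l" "\<sigma> q = \<tau>" using cof[OF x'(1)] by blast
  obtain s where s: "q < s" "s < l" "\<forall>x<s. x \<le> q" using succ_in_lim[OF lim q(2)] by blast
  have sq: "\<xi>' \<le> s" using q(1) s(1) by simp
  define G where "G = run \<sigma> f_solved q"
  have Ginv: "G (inv \<tau> c) = G c" if "c \<in> Ob" for c
  proof -
    have "run \<sigma> f_solved s c = G (inv \<tau> c)" unfolding G_def run_succ[OF s(1) s(3)] act_apply q(3) ..
    moreover have "run \<sigma> f_solved s c = run \<sigma> f_solved l c" using x'(2) that sq s(2) by blast
    moreover have "run \<sigma> f_solved q c = run \<sigma> f_solved l c" using x'(2) that q by blast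
    ultimately show ?thesis unfolding G_def by simp
  qed
  have qth: "q \<le> \<theta>" using less_imp_le[OF q(2)] l1 by (blast intro: order.trans)
  have "\<exists>\<pi>. goodmap \<pi> \<and> (\<forall>c\<in>Ob. run \<sigma> f_solved q c = f_solved (\<pi> c))"
  proof (rule repr)
    show "finite Ob" by (rule finO)
    show "\<forall>q<\<theta>. btw (\<sigma> q)" by (rule bt)
    show "\<And>\<pi> c. goodmap \<pi> \<Longrightarrow> c \<in> Ob \<Longrightarrow> \<pi> c \<in> Ob" by (rule Oinv)
    show "\<forall>\<eta>\<le>\<theta>. \<forall>c\<in>Ob. run \<sigma> f_solved \<eta> c \<noteq> None" by (rule leg)
    show "q \<le> \<theta>" by (rule qth)
  qed
  then obtain \<pi> where \<pi>: "goodmap \<pi>" "\<forall>c\<in>Ob. G c = f_solved (\<pi> c)" unfolding G_def by blast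
  have k4: "k \<le> 4" using tk(2) by auto
  define \<rho> where "\<rho> = qturn i \<alpha> ^^ (4 - k)"
  have \<rho>inv: "inv \<tau> = \<rho>" unfolding \<rho>_def tk(1) by (rule qturn_pow_inv(1)[OF k4])
  have g\<rho>: "goodmap \<rho>" unfolding \<rho>_def by (rule goodmap_pow)
  define p0 where "p0 = mkp i \<alpha>"
  have j: "4 - k \<in> {1, 2, 3::nat}" using tk(2) by auto
  have inO: "(p0, m) \<in> Ob" if "(p0, m) \<in> cells" for m
    using that mkp_facts(4) unfolding Ob_def p0_def C_def by blast
  show False
  proof (rule key[OF \<pi>(1) goodmap_comp[OF \<pi>(1) g\<rho>], of p0 "ma i" "mb i" \<alpha>])
    fix m assume m: "(p0, m) \<in> cells"
    have c0: "(p0, m) \<in> Ob" using inO[OF m] .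
    have c1: "\<rho> (p0, m) \<in> Ob" using Oinv[OF g\<rho> c0] .
    have "G (\<rho> (p0, m)) = G (p0, m)" using Ginv[OF c0] unfolding \<rho>inv .
    then show "f_solved ((\<pi> \<circ> \<rho>) (p0, m)) = f_solved (\<pi> (p0, m))" using \<pi>(2) c0 c1 by simp
  next
    have "fst (\<rho> (p0, ma i)) \<noteq> p0" unfolding \<rho>_def p0_def by (rule mkp_moves[OF j])
    then show "fst ((\<pi> \<circ> \<rho>) (p0, ma i)) \<noteq> fst (\<pi> (p0, ma i))"
      using goodmap_fst[OF \<pi>(1), of "\<rho> (p0, ma i)" "(p0, ma i)"] by simp
  next
    show "ma i \<noteq> mb i" "(p0, ma i) \<in> cells" "(p0, mb i) \<in> cells" unfolding p0_def by (rule mkp_facts)+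
    show "(p0, ma i) \<in> Oc {\<alpha>, cneg \<alpha>, PInf, NInf}" unfolding p0_def by (rule mkp_facts)
  next
    assume an: "\<alpha> \<notin> {Zero, PInf, NInf}"
    have E: "(p0, ma i) \<in> Ecells" unfolding p0_def by (rule mkp_E[OF an])
    have "w (\<rho> (p0, ma i)) = w (p0, ma i)" "\<rho> (p0, ma i) \<in> Ecells" using goodmap_E[OF g\<rho> E] by simp_all
    then show "w ((\<pi> \<circ> \<rho>) (p0, ma i)) = w (\<pi> (p0, ma i))"
      using goodmap_E[OF \<pi>(1)] E by simp
  qed
qed

theorem lemma4p2:
  fixes \<sigma> :: "'o::wellorder \<Rightarrow> 'l cell \<Rightarrow> 'l cell" and \<theta> :: 'o
  assumes "infinite (UNIV :: 'l set)"
    and "basic_sequence \<sigma> \<theta>"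
  shows "(convergent_over \<sigma> \<theta> f_solved \<longleftrightarrow> universally_convergent \<sigma> \<theta>)
       \<and> (universally_convergent \<sigma> \<theta> \<longleftrightarrow> twist_finite \<sigma> \<theta>)"
proof -
  have u2s: "convergent_over \<sigma> \<theta> f_solved" if uc: "universally_convergent \<sigma> \<theta>"
    unfolding convergent_over_def
  proof
    fix c :: "'l cell" assume c: "c \<in> cells"
    obtain d where "run \<sigma> (\<lambda>c. Some c) \<theta> c = Some d"
      using uc c unfolding universally_convergent_def convergent_over_def by blast
    then have "run \<sigma> f_solved \<theta> c = f_solved d" by (rule runU)
    then show "run \<sigma> f_solved \<theta> c \<noteq> None" by (simp add: f_solved_def)
  qed
  have tf2u: "universally_convergent \<sigma> \<theta>" if tf: "twist_finite \<sigma> \<theta>"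
  proof -
    have "\<forall>c. run \<sigma> (\<lambda>c. Some c) \<theta> c \<noteq> None"
      using tf_legal[OF assms(2) tf, of "\<lambda>c. Some c" \<theta>] by simp
    then show ?thesis unfolding universally_convergent_def convergent_over_def by blast
  qed
  have s2tf: "twist_finite \<sigma> \<theta>" if "convergent_over \<sigma> \<theta> f_solved"
    using hard[OF assms(2) that] .
  show ?thesis using u2s tf2u s2tf by blast
qed

end
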